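(* Let $\beta\ge 0$, and let $\pi^*_\beta=\{\pi^*_{h,\beta}\}_{h\in[H]}$ be a deterministic Markov optimal policy of the penalized machine MDP $\mathcal{M}^{\mathtt{M}}_\beta$, chosen greedily, i.e. $\pi^*_{h,\beta}(s)\in\arg\max_{a\in\bar{\mathcal{A}}}Q^*_{h,\beta}(s,a)$ for all $h,s$. Then for every $s\in\mathcal{S}$ and $h\in[H]$ with $\pi^*_{h,\beta}(s)\ne\text{defer}$, $$Q_h^*\big(s,\pi^*_{h,\beta}(s)\big)-V_h^{\pi^{\mathtt{H}}}(s)\ \ge\ \beta,$$ where $Q^*_h$ is the optimal $Q$-function of the unpenalized machine MDP $\mathcal{M}^{\mathtt{M}}$ and $V_h^{\pi^{\mathtt{H}}}$ is the value (in $\mathcal{M}^{\mathtt{M}}$) of the machine policy that always chooses defer.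
   Context: A human acts in a finite-horizon episodic MDP with finite state set $\mathcal{S}$, finite action set $\mathcal{A}$, horizon $H$, time-dependent transition kernel $p_h(s'\mid s,a)$ and time-dependent reward $r_h(s,a)\in[0,1]$, $h\in[H]$. The human follows a fixed stochastic policy $\pi^{\mathtt{H}}$ with $\pi^{\mathtt{H}}_h(a\mid s)<1$. The machine chooses advice $a^{\mathtt{M}}\in\bar{\mathcal{A}}:=\mathcal{A}\cup\{\text{defer}\}$; with adherence $\theta:\mathcal{S}\times\mathcal{A}\to[0,1]$, the human's action satisfies $\mathbb{P}_h(a^{\mathtt{H}}=a\mid s,\text{defer})=\pi^{\mathtt{H}}_h(a\mid s)$, and for $a^{\mathtt{M}}\ne\text{defer}$: $\mathbb{P}_h(a^{\mathtt{H}}=a^{\mathtt{M}}\mid s,a^{\mathtt{M}})=\theta(s,a^{\mathtt{M}})$ and $\mathbb{P}_h(a^{\mathtt{H}}=a\mid s,a^{\mathtt{M}})=(1-\theta(s,a^{\mathtt{M}}))\pi^{\mathtt{H}}_h(a\mid s)/(1-\pi^{\mathtt{H}}_h(a^{\mathtt{M}}\mid s))$ for $a\ne a^{\mathtt{M}}$. The machine's MDP $\mathcal{M}^{\mathtt{M}}$ has states $\mathcal{S}$, actions $\bar{\mathcal{A}}$, transition $p^{\mathtt{M}}_h(s'\mid s,a^{\mathtt{M}})=\sum_{a}p_h(s'\mid s,a)\mathbb{P}_h(a\mid s,a^{\mathtt{M}})$ and reward $r^{\mathtt{M}}_h(s,a^{\mathtt{M}})=\sum_a r_h(s,a)\mathbb{P}_h(a\mid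 s,a^{\mathtt{M}})$. Values of deterministic Markov policies $\pi$ are $V^\pi_h(s)=\mathbb{E}[\sum_{h'=h}^H r^{\mathtt{M}}_{h'}(s_{h'},\pi_{h'}(s_{h'}))\mid s_h=s]$, $V^\pi_{H+1}\equiv 0$; $V^*_h=\max_\pi V^\pi_h$ and $Q^*_h(s,a)=r^{\mathtt{M}}_h(s,a)+\sum_{s'}p^{\mathtt{M}}_h(s'\mid s,a)V^*_{h+1}(s')$. The penalized MDP $\mathcal{M}^{\mathtt{M}}_\beta$ is identical to $\mathcal{M}^{\mathtt{M}}$ except its reward is $r^{\mathtt{M}}_{h,\beta}(s,a)=r^{\mathtt{M}}_h(s,a)-\beta\,\mathbb{I}\{a\ne\text{defer}\}$; $V^*_{h,\beta}$ and $Q^*_{h,\beta}(s,a)=r^{\mathtt{M}}_{h,\beta}(s,a)+\sum_{s'}p^{\mathtt{M}}_h(s'\mid s,a)V^*_{h+1,\beta}(s')$ denote its optimal value and $Q$-functions. *)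

theory Defs
  imports Complex_Main
begin

text \<open>Advice space: None = defer, Some a = recommend action a.
  States 's and actions 'a are finite types. Time steps h range over {1..H}.\<close>

definition hprob :: "(nat \<Rightarrow> 's \<Rightarrow> 'a \<Rightarrow> real) \<Rightarrow> ('s \<Rightarrow> 'a \<Rightarrow> real)
    \<Rightarrow> nat \<Rightarrow> 's \<Rightarrow> 'a option \<Rightarrow> 'a \<Rightarrow> real" where
  "hprob piH theta h s am a = (case am of
      None \<Rightarrow> piH h s a
    | Some b \<Rightarrow> (if a = b then theta s b
                 else (1 - theta s b) * piH h s a / (1 - piH h s b)))"

definition pM :: "(nat \<Rightarrow> 's \<Rightarrow> 'a::finite \<Rightarrow> 's \<Rightarrow> real) \<Rightarrow> (nat \<Rightarrow> 's \<Rightarrow> 'a \<Rightarrow> real)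
    \<Rightarrow> ('s \<Rightarrow> 'a \<Rightarrow> real) \<Rightarrow> nat \<Rightarrow> 's \<Rightarrow> 'a option \<Rightarrow> 's \<Rightarrow> real" where
  "pM p piH theta h s am s' = (\<Sum>a\<in>UNIV. p h s a s' * hprob piH theta h s am a)"

definition rM :: "(nat \<Rightarrow> 's \<Rightarrow> 'a::finite \<Rightarrow> real) \<Rightarrow> (nat \<Rightarrow> 's \<Rightarrow> 'a \<Rightarrow> real)
    \<Rightarrow> ('s \<Rightarrow> 'a \<Rightarrow> real) \<Rightarrow> nat \<Rightarrow> 's \<Rightarrow> 'a option \<Rightarrow> real" where
  "rM r piH theta h s am = (\<Sum>a\<in>UNIV. r h s a * hprob piH theta h s am a)"

definition rMb :: "real \<Rightarrow> (nat \<Rightarrow> 's \<Rightarrow> 'b option \<Rightarrow> real) \<Rightarrow> nat \<Rightarrow> 's \<Rightarrow> 'b option \<Rightarrow> real" where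
  "rMb \<beta> R h s am = R h s am - \<beta> * (if am = None then 0 else 1)"

primrec Veval :: "nat \<Rightarrow> (nat \<Rightarrow> 's::finite \<Rightarrow> 'b \<Rightarrow> real) \<Rightarrow> (nat \<Rightarrow> 's \<Rightarrow> 'b \<Rightarrow> 's \<Rightarrow> real)
    \<Rightarrow> (nat \<Rightarrow> 's \<Rightarrow> 'b) \<Rightarrow> nat \<Rightarrow> 's \<Rightarrow> real" where
  "Veval 0 R P \<pi> h s = 0"
| "Veval (Suc k) R P \<pi> h s =
     R h s (\<pi> h s) + (\<Sum>s'\<in>UNIV. P h s (\<pi> h s) s' * Veval k R P \<pi> (Suc h) s')"

definition Vpi :: "nat \<Rightarrow> (nat \<Rightarrow> 's::finite \<Rightarrow> 'b \<Rightarrow> real) \<Rightarrow> (nat \<Rightarrow> 's \<Rightarrow> 'b \<Rightarrow> 's \<Rightarrow> real)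
    \<Rightarrow> (nat \<Rightarrow> 's \<Rightarrow> 'b) \<Rightarrow> nat \<Rightarrow> 's \<Rightarrow> real" where
  "Vpi H R P \<pi> h s = Veval (Suc H - h) R P \<pi> h s"

definition Vstar :: "nat \<Rightarrow> (nat \<Rightarrow> 's::finite \<Rightarrow> 'b \<Rightarrow> real) \<Rightarrow> (nat \<Rightarrow> 's \<Rightarrow> 'b \<Rightarrow> 's \<Rightarrow> real)
    \<Rightarrow> nat \<Rightarrow> 's \<Rightarrow> real" where
  "Vstar H R P h s = Sup {Vpi H R P \<pi> h s | \<pi>. True}"

definition Qstar :: "nat \<Rightarrow> (nat \<Rightarrow> 's::finite \<Rightarrow> 'b \<Rightarrow> real) \<Rightarrow> (nat \<Rightarrow> 's \<Rightarrow> 'b \<Rightarrow> 's \<Rightarrow> real)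
    \<Rightarrow> nat \<Rightarrow> 's \<Rightarrow> 'b \<Rightarrow> real" where
  "Qstar H R P h s b = R h s b + (\<Sum>s'\<in>UNIV. P h s b s' * Vstar H R P (Suc h) s')"

end

theory Submission
  imports Defs
begin


lemma hprob_nonneg:
  assumes "\<And>a. piH h s a \<ge> 0" "\<And>a. piH h s a < 1" "\<And>s a. 0 \<le> theta s a \<and> theta s a \<le> 1"
  shows "hprob piH theta h s am a \<ge> 0"
proof (cases am)
  case None then show ?thesis using assms by (simp add: hprob_def)
next
  case (Some b)
  have "(1 - theta s b) * piH h s a / (1 - piH h s b) \<ge> 0"
    using assms(1)[of a] assms(2)[of b] assms(3)[of s b] by simp
  then show ?thesis using Some assms(3)[of s b] by (simp add: hprob_def)
qed

lemma hprob_sum: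
  fixes piH :: "nat \<Rightarrow> 's \<Rightarrow> 'a::finite \<Rightarrow> real"
  assumes "\<And>a. piH h s a < 1" "(\<Sum>a\<in>UNIV. piH h s a) = 1"
  shows "(\<Sum>a\<in>UNIV. hprob piH theta h s am a) = 1"
proof (cases am)
  case None then show ?thesis using assms by (simp add: hprob_def)
next
  case (Some b)
  have ne: "1 - piH h s b \<noteq> 0" using assms(1)[of b] by simp
  have "(\<Sum>a\<in>UNIV. hprob piH theta h s am a)
      = theta s b + (\<Sum>a\<in>UNIV-{b}. (1 - theta s b) * piH h s a / (1 - piH h s b))"
    using Some by (simp add: hprob_def sum.remove[of UNIV b])
  also have "(\<Sum>a\<in>UNIV-{b}. (1 - theta s b) * piH h s a / (1 - piH h s b))
      = (1 - theta s b) / (1 - piH h s b) * (\<Sum>a\<in>UNIV-{b}. piH h s a)"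
    by (simp add: sum_distrib_left)
  also have "(\<Sum>a\<in>UNIV-{b}. piH h s a) = 1 - piH h s b"
    using assms(2) by (simp add: sum.remove[of UNIV b])
  finally show ?thesis using ne by simp
qed

lemma Veval_le:
  assumes Pnn: "\<And>h s b s'. h \<in> {1..H} \<Longrightarrow> P h s b s' \<ge> 0"
    and Psum: "\<And>h s b. h \<in> {1..H} \<Longrightarrow> (\<Sum>s'\<in>UNIV. P h s b s') = 1"
    and Rle: "\<And>h s b. h \<in> {1..H} \<Longrightarrow> R h s b \<le> 1"
  shows "1 \<le> h \<Longrightarrow> h + k \<le> Suc H \<Longrightarrow> Veval k R P \<pi> h s \<le> real k"
proof (induction k arbitrary: h s)
  case 0 then show ?case by simp
next
  case (Suc k)
  have hin: "h \<in> {1..H}" using Suc.prems by auto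
  have "(\<Sum>s'\<in>UNIV. P h s (\<pi> h s) s' * Veval k R P \<pi> (Suc h) s')
        \<le> (\<Sum>s'\<in>UNIV. P h s (\<pi> h s) s' * real k)"
    by (rule sum_mono, rule mult_left_mono, rule Suc.IH) (use Suc.prems Pnn[OF hin] in auto)
  also have "\<dots> = real k" using Psum[OF hin] by (simp add: sum_distrib_right[symmetric])
  finally show ?case using Rle[OF hin, of s "\<pi> h s"] by simp
qed

lemma Veval_pen_le:
  assumes Pnn: "\<And>h s b s'. h \<in> {1..H} \<Longrightarrow> P h s b s' \<ge> 0"
    and bnn: "\<beta> \<ge> 0"
  shows "1 \<le> h \<Longrightarrow> h + k \<le> Suc H \<Longrightarrow> Veval k (rMb \<beta> R) P \<pi> h s \<le> Veval k R P \<pi> h s"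
proof (induction k arbitrary: h s)
  case 0 then show ?case by simp
next
  case (Suc k)
  have hin: "h \<in> {1..H}" using Suc.prems by auto
  have "(\<Sum>s'\<in>UNIV. P h s (\<pi> h s) s' * Veval k (rMb \<beta> R) P \<pi> (Suc h) s')
        \<le> (\<Sum>s'\<in>UNIV. P h s (\<pi> h s) s' * Veval k R P \<pi> (Suc h) s')"
    by (rule sum_mono, rule mult_left_mono, rule Suc.IH) (use Suc.prems Pnn[OF hin] in auto)
  moreover have "rMb \<beta> R h s (\<pi> h s) \<le> R h s (\<pi> h s)" using bnn by (simp add: rMb_def)
  ultimately show ?case by simp
qed

lemma Veval_defer:
  "Veval k (rMb \<beta> R) P (\<lambda>_ _. None) h s = Veval k R P (\<lambda>_ _. None) h s"
  by (induction k arbitrary: h s) (simp_all add: rMb_def)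

theorem proposition1:
  fixes H :: nat
    and p :: "nat \<Rightarrow> 's::finite \<Rightarrow> 'a::finite \<Rightarrow> 's \<Rightarrow> real"
    and r :: "nat \<Rightarrow> 's \<Rightarrow> 'a \<Rightarrow> real"
    and piH :: "nat \<Rightarrow> 's \<Rightarrow> 'a \<Rightarrow> real"
    and theta :: "'s \<Rightarrow> 'a \<Rightarrow> real"
    and \<beta> :: real
    and pistar :: "nat \<Rightarrow> 's \<Rightarrow> 'a option"
  assumes p_nonneg: "\<And>h s a s'. h \<in> {1..H} \<Longrightarrow> p h s a s' \<ge> 0"
    and p_sum: "\<And>h s a. h \<in> {1..H} \<Longrightarrow> (\<Sum>s'\<in>UNIV. p h s a s') = 1"
    and r_range: "\<And>h s a. h \<in> {1..H} \<Longrightarrow> 0 \<le> r h s a \<and> r h s a \<le> 1"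
    and piH_nonneg: "\<And>h s a. h \<in> {1..H} \<Longrightarrow> piH h s a \<ge> 0"
    and piH_lt1: "\<And>h s a. h \<in> {1..H} \<Longrightarrow> piH h s a < 1"
    and piH_sum: "\<And>h s. h \<in> {1..H} \<Longrightarrow> (\<Sum>a\<in>UNIV. piH h s a) = 1"
    and theta_range: "\<And>s a. 0 \<le> theta s a \<and> theta s a \<le> 1"
    and beta_nonneg: "\<beta> \<ge> 0"
    and greedy: "\<And>h s b. h \<in> {1..H} \<Longrightarrow>
        Qstar H (rMb \<beta> (rM r piH theta)) (pM p piH theta) h s b
          \<le> Qstar H (rMb \<beta> (rM r piH theta)) (pM p piH theta) h s (pistar h s)"
  shows "\<forall>h\<in>{1..H}. \<forall>s. pistar h s \<noteq> None \<longrightarrow>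
     Qstar H (rM r piH theta) (pM p piH theta) h s (pistar h s)
       - Vpi H (rM r piH theta) (pM p piH theta) (\<lambda>h s. None) h s \<ge> \<beta>"
  proof (intro ballI allI impI)
  fix h s assume hin: "h \<in> {1..H}" and ns: "pistar h s \<noteq> None"
  define R where "R = rM r piH theta"
  define P where "P = pM p piH theta"
  define Rb where "Rb = rMb \<beta> R"
  have hp_nn: "\<And>h s am a. h \<in> {1..H} \<Longrightarrow> hprob piH theta h s am a \<ge> 0"
    by (rule hprob_nonneg) (use piH_nonneg piH_lt1 theta_range in auto)
  have hp_sum: "\<And>h s am. h \<in> {1..H} \<Longrightarrow> (\<Sum>a\<in>UNIV. hprob piH theta h s am a) = 1"
    by (rule hprob_sum) (use piH_lt1 piH_sum in auto)
  have Pnn: "\<And>h s b s'. h \<in> {1..H} \<Longrightarrow> P h s b s' \<ge> 0"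
    unfolding P_def pM_def by (intro sum_nonneg mult_nonneg_nonneg p_nonneg hp_nn)
  have Psum: "\<And>h s b. h \<in> {1..H} \<Longrightarrow> (\<Sum>s'\<in>UNIV. P h s b s') = 1"
  proof -
    fix h s b assume h: "h \<in> {1..H}"
    have "(\<Sum>s'\<in>UNIV. P h s b s') = (\<Sum>a\<in>UNIV. hprob piH theta h s b a * (\<Sum>s'\<in>UNIV. p h s a s'))"
      unfolding P_def pM_def by (subst sum.swap) (simp add: sum_distrib_right mult.commute)
    also have "\<dots> = 1" using p_sum[OF h] hp_sum[OF h] by simp
    finally show "(\<Sum>s'\<in>UNIV. P h s b s') = 1" .
  qed
  have Rle: "\<And>h s b. h \<in> {1..H} \<Longrightarrow> R h s b \<le> 1"
  proof -
    fix h s b assume h: "h \<in> {1..H}"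
    have "R h s b \<le> (\<Sum>a\<in>UNIV. 1 * hprob piH theta h s b a)"
      unfolding R_def rM_def
      by (rule sum_mono, rule mult_right_mono) (use r_range[OF h] hp_nn[OF h] in auto)
    then show "R h s b \<le> 1" using hp_sum[OF h] by simp
  qed
  let ?D = "(\<lambda>h s. None) :: nat \<Rightarrow> 's \<Rightarrow> 'a option"
  have h1: "1 \<le> Suc h" "Suc h + (Suc H - Suc h) \<le> Suc H" using hin by auto
  have VL: "Veval (Suc H - Suc h) R P \<pi> (Suc h) s' \<le> real (Suc H - Suc h)" for \<pi> s'
    by (rule Veval_le[where H=H and P=P and R=R, OF Pnn Psum Rle h1])
  have VP: "Veval (Suc H - Suc h) (rMb \<beta> R) P \<pi> (Suc h) s' \<le> Veval (Suc H - Suc h) R P \<pi> (Suc h) s'" for \<pi> s'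
    by (rule Veval_pen_le[where H=H and P=P and \<beta>=\<beta> and R=R, OF Pnn beta_nonneg h1])
  have bddR: "bdd_above {Vpi H R P \<pi> (Suc h) s' | \<pi>. True}" for s'
    unfolding bdd_above_def Vpi_def
    using VL by blast
  have bddRb: "bdd_above {Vpi H Rb P \<pi> (Suc h) s' | \<pi>. True}" for s'
    unfolding bdd_above_def Vpi_def Rb_def
    using VL VP by (smt (verit) mem_Collect_eq)
  have V1: "Vpi H R P ?D (Suc h) s' \<le> Vstar H Rb P (Suc h) s'" for s'
  proof -
    have "Vpi H R P ?D (Suc h) s' = Vpi H Rb P ?D (Suc h) s'"
      unfolding Vpi_def Rb_def by (simp add: Veval_defer)
    also have "\<dots> \<le> Vstar H Rb P (Suc h) s'"
      unfolding Vstar_def by (rule cSup_upper) (use bddRb in auto)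
    finally show ?thesis .
  qed
  have V2: "Vstar H Rb P (Suc h) s' \<le> Vstar H R P (Suc h) s'" for s'
    unfolding Vstar_def
  proof (rule cSup_least)
    show "{Vpi H Rb P \<pi> (Suc h) s' |\<pi>. True} \<noteq> {}" by auto
  next
    fix x assume "x \<in> {Vpi H Rb P \<pi> (Suc h) s' |\<pi>. True}"
    then obtain \<pi> where x: "x = Vpi H Rb P \<pi> (Suc h) s'" by auto
    have "x \<le> Vpi H R P \<pi> (Suc h) s'"
      unfolding x Vpi_def Rb_def by (rule VP)
    also have "\<dots> \<le> Sup {Vpi H R P \<pi> (Suc h) s' |\<pi>. True}"
      by (rule cSup_upper) (use bddR in auto)
    finally show "x \<le> Sup {Vpi H R P \<pi> (Suc h) s' |\<pi>. True}" .
  qed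
  have g: "Qstar H Rb P h s None \<le> Qstar H Rb P h s (pistar h s)"
    using greedy[OF hin, of s None] unfolding Rb_def R_def P_def .
  have Veq: "Vpi H R P ?D h s = R h s None + (\<Sum>s'\<in>UNIV. P h s None s' * Vpi H R P ?D (Suc h) s')"
  proof -
    have "Suc H - h = Suc (H - h)" "Suc H - Suc h = H - h" using hin by auto
    then show ?thesis unfolding Vpi_def by simp
  qed
  have s1: "(\<Sum>s'\<in>UNIV. P h s None s' * Vpi H R P ?D (Suc h) s') \<le> (\<Sum>s'\<in>UNIV. P h s None s' * Vstar H Rb P (Suc h) s')"
    by (rule sum_mono, rule mult_left_mono[OF V1 Pnn[OF hin]])
  have s2: "(\<Sum>s'\<in>UNIV. P h s (pistar h s) s' * Vstar H Rb P (Suc h) s') \<le> (\<Sum>s'\<in>UNIV. P h s (pistar h s) s' * Vstar H R P (Suc h) s')"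
    by (rule sum_mono, rule mult_left_mono[OF V2 Pnn[OF hin]])
  have "Qstar H R P h s (pistar h s) - Vpi H R P ?D h s \<ge> \<beta>"
    using g s1 s2 ns unfolding Veq Qstar_def Rb_def rMb_def by simp
  then show "Qstar H (rM r piH theta) (pM p piH theta) h s (pistar h s)
       - Vpi H (rM r piH theta) (pM p piH theta) (\<lambda>h s. None) h s \<ge> \<beta>"
    unfolding R_def P_def .
qed

end
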